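(* Let $d\ge2$, let $A,B$ be $d$-dimensional systems, and let $\rho_{AB}=\dfrac{\mathbb I_{AB}+\beta W}{d^2+d\beta}$ with $\beta\in\mathbb R$, $|\beta|\le1$, where $W=\sum_{i,j}|i\rangle\langle j|\otimes|j\rangle\langle i|$ is the swap operator (a Werner state). Then $$Q^A_{\mathcal N}(\rho_{AB})=Q^{AB}_{\mathcal N}(\rho_{AB})=\frac{|\beta|(d-1)}{2(d+\beta)}.$$
   Context: The negativity of a bipartite state $\tau_{X:Y}$ is $\mathcal N_{X:Y}(\tau)=(\|\tau^\Gamma\|_1-1)/2$ with $\tau^\Gamma$ the partial transpose on one party and $\|\cdot\|_1$ the trace norm. For a system $S$ of dimension $m$ with orthonormal basis $\{|s_k\rangle\}$, the measurement interaction is the isometry $V_S:S\to S\otimes S'$ ($S'$ $m$-dimensional with computational basis $\{|k\rangle\}$), $V_S|s_k\rangle=|s_k\rangle|k\rangle$. One-sided negativity of quantumness: $Q^A_{\mathcal N}(\rho_{AB})=\min\mathcal N_{AB:A'}\big((V_A\otimes\mathbb I_B)\rho_{AB}(V_A\otimes\mathbb I_B)^\dagger\big)$ over orthonormal bases of $A$. Two-sided: $Q^{AB}_{\mathcal N}(\rho_{AB})=\min\mathcal N_{AB:A'B'}\big((V_A\otimes V_B)\rho_{AB}(V_A\otimes V_B)^\dagger\big)$ over orthonormal bases of $A$ and $B$. *)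

theory Defs
  imports Complex_Main "HOL-Library.Cardinality"
begin

text \<open>Operators on finite-dimensional Hilbert spaces are represented as complex
kernels indexed by finite types: an operator from C^'b to C^'a is a function
'a => 'b => complex (entry at row i, column j). Tensor products of systems
correspond to product index types.\<close>

type_synonym ('a, 'b) op = "'a \<Rightarrow> 'b \<Rightarrow> complex"

definition mmult :: "('a, 'b::finite) op \<Rightarrow> ('b, 'c) op \<Rightarrow> ('a, 'c) op" where
  "mmult M N = (\<lambda>i j. \<Sum>k\<in>UNIV. M i k * N k j)"

definition adjoint :: "('a, 'b) op \<Rightarrow> ('b, 'a) op" where
  "adjoint M = (\<lambda>i j. cnj (M j i))"

definition idop :: "('a, 'a) op" where
  "idop = (\<lambda>i j. if i = j then 1 else 0)"

definition kron :: "('a, 'b) op \<Rightarrow> ('c, 'd) op \<Rightarrow> ('a \<times> 'c, 'b \<times> 'd) op" where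
  "kron M N = (\<lambda>(i, k) (j, l). M i j * N k l)"

definition mtrace :: "('a::finite, 'a) op \<Rightarrow> complex" where
  "mtrace M = (\<Sum>i\<in>UNIV. M i i)"

definition psd :: "('a::finite, 'a) op \<Rightarrow> bool" where
  "psd P \<longleftrightarrow> (\<forall>i j. P i j = cnj (P j i)) \<and>
     (\<forall>v. 0 \<le> Re (\<Sum>i\<in>UNIV. \<Sum>j\<in>UNIV. cnj (v i) * P i j * v j))"

definition trace_norm :: "('a::finite, 'a) op \<Rightarrow> real" where
  "trace_norm M = Re (mtrace (THE P. psd P \<and> mmult P P = mmult (adjoint M) M))"

definition ptrans :: "('x \<times> 'y, 'x \<times> 'y) op \<Rightarrow> ('x \<times> 'y, 'x \<times> 'y) op" where
  "ptrans M = (\<lambda>(x, y) (x', y'). M (x, y') (x', y))"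

definition negativity :: "('x::finite \<times> 'y::finite, 'x \<times> 'y) op \<Rightarrow> real" where
  "negativity M = (trace_norm (ptrans M) - 1) / 2"

text \<open>Orthonormal basis of C^'d: s k is the k-th basis vector, with components s k i.\<close>
definition orthonormal_basis :: "('d::finite \<Rightarrow> 'd \<Rightarrow> complex) \<Rightarrow> bool" where
  "orthonormal_basis s \<longleftrightarrow>
     (\<forall>k l. (\<Sum>i\<in>UNIV. cnj (s k i) * s l i) = (if k = l then 1 else 0))"

text \<open>Measurement interaction V_S : S -> S (x) S', V_S |s_k> = |s_k>|k>, i.e.
V_S = sum_k |s_k>|k> <s_k|. Output index (i, k) with i in S and k in S'.\<close>
definition meas_iso :: "('d::finite \<Rightarrow> 'd \<Rightarrow> complex) \<Rightarrow> ('d \<times> 'd, 'd) op" where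
  "meas_iso s = (\<lambda>(i, k) j. s k i * cnj (s k j))"

text \<open>(V_A (x) I_B) rho (V_A (x) I_B)^dagger, regarded as a bipartite state AB : A'.\<close>
definition meas_A_state ::
  "('d::finite \<Rightarrow> 'd \<Rightarrow> complex) \<Rightarrow> ('d \<times> 'e::finite, 'd \<times> 'e) op
     \<Rightarrow> (('d \<times> 'e) \<times> 'd, ('d \<times> 'e) \<times> 'd) op" where
  "meas_A_state s \<rho> =
     (let V = kron (meas_iso s) (idop :: ('e, 'e) op);
          \<tau> = mmult (mmult V \<rho>) (adjoint V)
      in (\<lambda>((a, b), k) ((a', b'), k'). \<tau> ((a, k), b) ((a', k'), b')))"

text \<open>(V_A (x) V_B) rho (V_A (x) V_B)^dagger, regarded as a bipartite state AB : A'B'.\<close>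
definition meas_AB_state ::
  "('d::finite \<Rightarrow> 'd \<Rightarrow> complex) \<Rightarrow> ('e::finite \<Rightarrow> 'e \<Rightarrow> complex) \<Rightarrow> ('d \<times> 'e, 'd \<times> 'e) op
     \<Rightarrow> (('d \<times> 'e) \<times> ('d \<times> 'e), ('d \<times> 'e) \<times> ('d \<times> 'e)) op" where
  "meas_AB_state s t \<rho> =
     (let V = kron (meas_iso s) (meas_iso t);
          \<tau> = mmult (mmult V \<rho>) (adjoint V)
      in (\<lambda>((a, b), (k, l)) ((a', b'), (k', l')). \<tau> ((a, k), (b, l)) ((a', k'), (b', l'))))"

text \<open>One-sided and two-sided negativity of quantumness (minimum over orthonormal
bases, rendered as infimum).\<close>
definition QA_neg :: "('d::finite \<times> 'e::finite, 'd \<times> 'e) op \<Rightarrow> real" where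
  "QA_neg \<rho> = (INF s \<in> {s. orthonormal_basis s}. negativity (meas_A_state s \<rho>))"

definition QAB_neg :: "('d::finite \<times> 'e::finite, 'd \<times> 'e) op \<Rightarrow> real" where
  "QAB_neg \<rho> = (INF st \<in> {(s, t). orthonormal_basis s \<and> orthonormal_basis t}.
                   negativity (meas_AB_state (fst st) (snd st) \<rho>))"

definition swap_op :: "('d \<times> 'd, 'd \<times> 'd) op" where
  "swap_op = (\<lambda>(a, b) (c, e). if a = e \<and> b = c then 1 else 0)"

definition werner :: "real \<Rightarrow> ('d::finite \<times> 'd, 'd \<times> 'd) op" where
  "werner \<beta> = (\<lambda>x y. (idop x y + complex_of_real \<beta> * swap_op x y) /
     complex_of_real ((real CARD('d))\<^sup>2 + real CARD('d) * \<beta>))"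

end

theory Submission
  imports "HOL-Analysis.Cartesian_Space" Defs
begin

lemma sum_UNIV_prod: "(\<Sum>x\<in>(UNIV::('a::finite\<times>'b::finite) set). f x) = (\<Sum>a\<in>UNIV. \<Sum>b\<in>UNIV. f (a,b))"
  by (simp add: UNIV_Times_UNIV[symmetric] sum.cartesian_product del: UNIV_Times_UNIV)

lemma mmult_assoc: "mmult (mmult A (B::('b::finite,'c::finite) op)) C = mmult A (mmult B C)"
  unfolding mmult_def
  apply (rule ext)+
  apply (simp add: sum_distrib_left sum_distrib_right mult.assoc)
  apply (rule sum.swap)
  done

lemma adjoint_mmult: "adjoint (mmult A B) = mmult (adjoint B) (adjoint A)"
  unfolding mmult_def adjoint_def by (auto intro!: ext simp: mult.commute)

lemma adjoint_adjoint[simp]: "adjoint (adjoint A) = A"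
  unfolding adjoint_def by auto

lemma sum_delta_l[simp]: "(\<Sum>k\<in>(UNIV::'a::finite set). (if x = k then 1 else 0) * f k) = (f x::'b::semiring_1)"
proof -
  have "(\<Sum>k\<in>(UNIV::'a::finite set). (if x = k then 1 else 0) * f k) = (\<Sum>k\<in>UNIV. if x = k then f k else 0)"
    by (rule sum.cong) auto
  thus ?thesis by simp
qed

lemma sum_delta_r[simp]: "(\<Sum>k\<in>(UNIV::'a::finite set). f k * (if k = x then 1 else 0)) = (f x::'b::semiring_1)"
proof -
  have "(\<Sum>k\<in>(UNIV::'a::finite set). f k * (if k = x then 1 else 0)) = (\<Sum>k\<in>UNIV. if x = k then f k else 0)"
    by (rule sum.cong) auto
  thus ?thesis by simp
qed

lemma mmult_idop_left[simp]: "mmult idop A = A"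
  unfolding mmult_def idop_def by (simp add: fun_eq_iff)

lemma mmult_idop_right[simp]: "mmult A idop = A"
  unfolding mmult_def idop_def by (simp add: fun_eq_iff)

lemma mtrace_comm: "mtrace (mmult (A::('a::finite,'b::finite) op) B) = mtrace (mmult B A)"
  unfolding mtrace_def mmult_def
  apply (subst sum.swap) by (simp add: mult.commute)

definition qf :: "('a::finite,'a) op \<Rightarrow> ('a \<Rightarrow> complex) \<Rightarrow> complex" where
  "qf P v = (\<Sum>i\<in>UNIV. \<Sum>j\<in>UNIV. cnj (v i) * P i j * v j)"

definition col :: "('a \<Rightarrow> complex) \<Rightarrow> ('a, unit) op" where
  "col v = (\<lambda>i _. v i)"

lemma psd_iff: "psd P \<longleftrightarrow> adjoint P = P \<and> (\<forall>v. 0 \<le> Re (qf P v))"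
proof -
  have e: "adjoint P = P \<longleftrightarrow> (\<forall>i j. cnj (P j i) = P i j)" unfolding adjoint_def fun_eq_iff by blast
  have "(\<forall>i j. cnj (P j i) = P i j) \<longleftrightarrow> (\<forall>i j. P i j = cnj (P j i))" by (auto simp: eq_commute)
  with e show ?thesis unfolding psd_def qf_def by blast
qed

lemma qf_mmult: "qf P v = mmult (mmult (adjoint (col v)) P) (col v) () ()"
  unfolding qf_def mmult_def adjoint_def col_def
  apply (simp add: sum_distrib_right)
  apply (rule sum.swap)
  done

lemma psd_conj: assumes "psd P" shows "psd (mmult (mmult U P) (adjoint U))"
proof -
  have h: "adjoint P = P" and q: "\<And>v. 0 \<le> Re (qf P v)" using assms by (auto simp: psd_iff)
  have "adjoint (mmult (mmult U P) (adjoint U)) = mmult (mmult U P) (adjoint U)"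
    by (simp add: adjoint_mmult h mmult_assoc)
  moreover have "0 \<le> Re (qf (mmult (mmult U P) (adjoint U)) v)" for v
  proof -
    define w where "w = (\<lambda>k. mmult (adjoint U) (col v) k ())"
    have cw: "col w = mmult (adjoint U) (col v)" unfolding w_def col_def by auto
    have "qf (mmult (mmult U P) (adjoint U)) v = qf P w"
      unfolding qf_mmult cw by (simp add: adjoint_mmult mmult_assoc)
    then show ?thesis using q by simp
  qed
  ultimately show ?thesis by (simp add: psd_iff)
qed


lemma cnj_mult_self: "cnj z * z = complex_of_real ((cmod z)^2)"
  by (metis complex_norm_square mult.commute )


lemma psd_kernel:
  assumes "psd P" "Re (qf P w) = 0"
  shows "(\<Sum>j\<in>UNIV. P i j * w j) = 0"
proof -
  have h: "\<And>i j. P i j = cnj (P j i)" and q: "\<And>v. 0 \<le> Re (qf P v)"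
    using assms(1) unfolding psd_def qf_def by blast+
  define y where "y = (\<lambda>i. \<Sum>j\<in>UNIV. P i j * w j)"
  define S where "S = (\<Sum>i\<in>UNIV. (cmod (y i))^2)"
  define Q where "Q = Re (qf P y)"
  have yy: "(\<Sum>i\<in>UNIV. cnj (y i) * y i) = complex_of_real S"
    unfolding S_def by (simp add: cnj_mult_self)
  have t1: "(\<Sum>i\<in>UNIV. \<Sum>j\<in>UNIV. cnj (y i) * P i j * w j) = (\<Sum>i\<in>UNIV. cnj (y i) * y i)"
    unfolding y_def by (simp add: sum_distrib_left mult.assoc)
  have cy: "(\<Sum>i\<in>UNIV. cnj (w i) * P i j) = cnj (y j)" for j
    unfolding y_def by (subst h) (simp add: mult.commute)
  have t2: "(\<Sum>i\<in>UNIV. \<Sum>j\<in>UNIV. cnj (w i) * P i j * y j) = (\<Sum>j\<in>UNIV. cnj (y j) * y j)"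
    apply (subst sum.swap)
    apply (simp add: sum_distrib_right[symmetric] cy)
    done
  have key: "Re (qf P (\<lambda>i. w i - of_real t * y i)) = Re (qf P w) - 2*t*S + t^2 * Q" for t
  proof -
    have ex: "cnj (w i - of_real t * y i) * P i j * (w j - of_real t * y j)
       = cnj (w i) * P i j * w j - of_real t * (cnj (y i) * P i j * w j)
         - of_real t * (cnj (w i) * P i j * y j) + (of_real t)^2 * (cnj (y i) * P i j * y j)" for i j
      by (simp add: algebra_simps power2_eq_square)
    have "qf P (\<lambda>i. w i - of_real t * y i) = qf P w - of_real t * (\<Sum>i\<in>UNIV. \<Sum>j\<in>UNIV. cnj (y i) * P i j * w j)
        - of_real t * (\<Sum>i\<in>UNIV. \<Sum>j\<in>UNIV. cnj (w i) * P i j * y j) + (of_real t)^2 * qf P y"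
      unfolding qf_def ex
      by (simp add: sum.distrib sum_subtractf sum_distrib_left)
    also have "\<dots> = qf P w - of_real t * of_real S - of_real t * of_real S + (of_real t)^2 * qf P y"
      using t1 t2 yy by simp
    finally show ?thesis unfolding Q_def by (simp add: power2_eq_square)
  qed
  have S0: "S \<ge> 0" unfolding S_def by (simp add: sum_nonneg)
  have Q0: "Q \<ge> 0" unfolding Q_def using q by simp
  have "S = 0"
  proof (rule ccontr)
    assume "S \<noteq> 0"
    hence Sp: "S > 0" using S0 by simp
    define t where "t = S / (Q + 1)"
    have tp: "t > 0" unfolding t_def using Sp Q0 by simp
    have tQ: "t * Q < S" unfolding t_def using Sp Q0 by (simp add: field_simps)
    have "0 \<le> Re (qf P (\<lambda>i. w i - of_real t * y i))" by (rule q)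
    also have "\<dots> = t * (t * Q - 2 * S)" unfolding key assms(2) by (simp add: power2_eq_square algebra_simps)
    finally have "0 \<le> t * (t * Q - 2 * S)" .
    moreover have "t * (t * Q - 2 * S) < 0" using tp tQ Sp by (simp add: mult_pos_neg)
    ultimately show False by simp
  qed
  hence "\<forall>i\<in>UNIV. (cmod (y i))^2 = 0" unfolding S_def
    by (subst sum_nonneg_eq_0_iff[symmetric]) auto
  thus ?thesis unfolding y_def by simp
qed


lemma psd_herm: "psd P \<Longrightarrow> P i j = cnj (P j i)"
  unfolding psd_def by blast

lemma psd_qf: "psd P \<Longrightarrow> 0 \<le> Re (qf P v)"
  unfolding psd_def qf_def by blast

lemma sum_cmod_sq_zero:
  assumes "(\<Sum>j\<in>(UNIV::'a::finite set). cnj (f j) * f j) = 0"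
  shows "f j = 0"
proof -
  have "complex_of_real (\<Sum>j\<in>(UNIV::'a::finite set). (cmod (f j))^2) = 0"
    using assms by (simp add: cnj_mult_self)
  hence "(\<Sum>j\<in>(UNIV::'a::finite set). (cmod (f j))^2) = 0" by (simp only: of_real_eq_0_iff)
  hence "\<forall>j\<in>UNIV. (cmod (f j))^2 = 0"
    by (subst sum_nonneg_eq_0_iff[symmetric]) auto
  thus ?thesis by simp
qed

lemma psd_sqrt_unique:
  assumes P: "psd P" and R: "psd R" and eq: "mmult P P = mmult R R"
  shows "P = R"
proof -
  define D where "D = (\<lambda>i j. P i j - R i j)"
  have hD: "D i j = cnj (D j i)" for i j
    unfolding D_def using psd_herm[OF P] psd_herm[OF R] by (metis complex_cnj_diff)
  have eqe: "(\<Sum>j\<in>UNIV. P i j * P j p) = (\<Sum>j\<in>UNIV. R i j * R j p)" for i p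
    using fun_cong[OF fun_cong[OF eq, of i], of p] unfolding mmult_def by simp
  have eq0: "(\<Sum>j\<in>UNIV. P i j * D j p) + (\<Sum>j\<in>UNIV. D i j * R j p) = 0" for i p
    unfolding D_def using eqe[of i p] by (simp add: algebra_simps sum.distrib sum_subtractf)
  define A where "A = (\<Sum>p\<in>UNIV. qf P (\<lambda>i. D i p))"
  define B where "B = (\<Sum>i\<in>UNIV. qf R (\<lambda>j. D j i))"
  have A': "A = (\<Sum>p\<in>UNIV. \<Sum>i\<in>UNIV. D p i * (\<Sum>j\<in>UNIV. P i j * D j p))"
    unfolding A_def qf_def by (simp add: sum_distrib_left mult.assoc flip: hD)
  have B': "B = (\<Sum>p\<in>UNIV. \<Sum>i\<in>UNIV. D p i * (\<Sum>j\<in>UNIV. D i j * R j p))"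
  proof -
    have "B = (\<Sum>i\<in>UNIV. \<Sum>j\<in>UNIV. \<Sum>p\<in>UNIV. D p i * (D i j * R j p))"
      unfolding B_def qf_def by (simp add: sum_distrib_left sum_distrib_right mult_ac flip: hD)
    also have "\<dots> = (\<Sum>i\<in>UNIV. \<Sum>p\<in>UNIV. \<Sum>j\<in>UNIV. D p i * (D i j * R j p))"
      by (rule sum.cong[OF refl], rule sum.swap)
    also have "\<dots> = (\<Sum>p\<in>UNIV. \<Sum>i\<in>UNIV. \<Sum>j\<in>UNIV. D p i * (D i j * R j p))"
      by (rule sum.swap)
    finally show ?thesis by (simp add: sum_distrib_left)
  qed
  have "A + B = (\<Sum>p\<in>UNIV. \<Sum>i\<in>UNIV. D p i * ((\<Sum>j\<in>UNIV. P i j * D j p) + (\<Sum>j\<in>UNIV. D i j * R j p)))"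
    unfolding A' B' by (simp only: sum.distrib[symmetric] distrib_left[symmetric])
  also have "\<dots> = 0" by (simp only: eq0 mult_zero_right sum.neutral_const)
  finally have AB: "A + B = 0" .
  have ReA: "0 \<le> Re (qf P (\<lambda>i. D i p))" for p by (rule psd_qf[OF P])
  have ReB: "0 \<le> Re (qf R (\<lambda>j. D j i))" for i by (rule psd_qf[OF R])
  have "Re A + Re B = 0" using AB by (metis plus_complex.sel(1) zero_complex.sel(1))
  moreover have "Re A \<ge> 0" unfolding A_def by (simp add: sum_nonneg ReA)
  moreover have "Re B \<ge> 0" unfolding B_def by (simp add: sum_nonneg ReB)
  ultimately have "Re A = 0" "Re B = 0" by linarith+
  hence zA: "\<forall>p\<in>UNIV. Re (qf P (\<lambda>i. D i p)) = 0" and zB: "\<forall>i\<in>UNIV. Re (qf R (\<lambda>j. D j i)) = 0"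
    unfolding A_def B_def
    by (subst sum_nonneg_eq_0_iff[symmetric]; auto simp: ReA ReB)+
  have kP: "(\<Sum>j\<in>UNIV. P i j * D j p) = 0" for i p using psd_kernel[OF P] zA by blast
  have kR: "(\<Sum>j\<in>UNIV. R i j * D j p) = 0" for i p using psd_kernel[OF R] zB by blast
  have "(\<Sum>j\<in>UNIV. D i j * D j p) = 0" for i p
  proof -
    have Dij: "D i j = P i j - R i j" for j by (simp add: D_def)
    have "(\<Sum>j\<in>UNIV. D i j * D j p) = (\<Sum>j\<in>UNIV. P i j * D j p) - (\<Sum>j\<in>UNIV. R i j * D j p)"
      by (simp only: Dij left_diff_distrib sum_subtractf)
    thus ?thesis using kP[of i p] kR[of i p] by simp
  qed
  hence "(\<Sum>j\<in>UNIV. cnj (D j i) * D j i) = 0" for i by (simp flip: hD)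
  hence "D j i = 0" for i j by (rule sum_cmod_sq_zero)
  thus ?thesis unfolding D_def by (auto intro!: ext)
qed

lemma trace_norm_eq:
  assumes "psd P" "mmult P P = mmult (adjoint M) M"
  shows "trace_norm M = Re (mtrace P)"
proof -
  have "(THE P. psd P \<and> mmult P P = mmult (adjoint M) M) = P"
    apply (rule the_equality)
    using assms apply simp
    using assms psd_sqrt_unique by metis
  thus ?thesis unfolding trace_norm_def by simp
qed



lemma sum_single_real:
  assumes "\<forall>r. r \<noteq> r0 \<longrightarrow> g r = 0"
  shows "(\<Sum>r\<in>(UNIV::'a::finite set). g r) = (g r0 :: 'b::comm_monoid_add)"
proof -
  have "sum g UNIV = g r0 + sum g (UNIV - {r0})" by (rule sum.remove) auto
  moreover have "sum g (UNIV - {r0}) = 0" using assms by (intro sum.neutral) auto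
  ultimately show ?thesis by simp
qed

lemma sum_single_sq:
  assumes "\<forall>r r'. f r \<noteq> 0 \<longrightarrow> f r' \<noteq> 0 \<longrightarrow> r = r'"
  shows "(\<Sum>r\<in>(UNIV::'a::finite set). cmod (f r))^2 = (\<Sum>r\<in>UNIV. (cmod (f r))^2)"
proof (cases "\<exists>r0. f r0 \<noteq> 0")
  case True
  then obtain r0 where r0: "f r0 \<noteq> 0" by blast
  have z: "\<forall>r. r \<noteq> r0 \<longrightarrow> f r = 0" using assms r0 by blast
  have "(\<Sum>r\<in>(UNIV::'a::finite set). cmod (f r)) = cmod (f r0)"
    by (rule sum_single_real) (simp add: z)
  moreover have "(\<Sum>r\<in>(UNIV::'a::finite set). (cmod (f r))^2) = (cmod (f r0))^2"
    by (rule sum_single_real) (simp add: z)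
  ultimately show ?thesis by simp
next
  case False
  thus ?thesis by simp
qed

lemma trace_norm_monomial:
  fixes M0 :: "('a::finite,'a) op" and U :: "('b::finite,'a) op"
  assumes herm: "adjoint M0 = M0"
    and mono: "\<forall>p q q'. M0 p q \<noteq> 0 \<longrightarrow> M0 p q' \<noteq> 0 \<longrightarrow> q = q'"
    and unit: "mmult (adjoint U) U = idop"
  shows "trace_norm (mmult (mmult U M0) (adjoint U)) = (\<Sum>p\<in>UNIV. \<Sum>q\<in>UNIV. cmod (M0 p q))"
proof -
  define g where "g p = (\<Sum>q\<in>UNIV. cmod (M0 p q))" for p
  define P0 where "P0 = (\<lambda>p p'. if p = p' then complex_of_real (g p) else 0)"
  have g0: "g p \<ge> 0" for p unfolding g_def by (simp add: sum_nonneg)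
  have hM: "M0 r p = cnj (M0 p r)" for r p
    using fun_cong[OF fun_cong[OF herm, of p], of r] unfolding adjoint_def by (metis complex_cnj_cnj)
  have psdP0: "psd P0"
  proof -
    have "adjoint P0 = P0" unfolding P0_def adjoint_def by (auto intro!: ext)
    moreover have "0 \<le> Re (qf P0 v)" for v
    proof -
      have inner: "(\<Sum>j\<in>UNIV. cnj (v i) * P0 i j * v j) = complex_of_real ((cmod (v i))^2 * g i)" for i
      proof -
        have "(\<Sum>j\<in>UNIV. cnj (v i) * P0 i j * v j) = (\<Sum>j\<in>UNIV. if i = j then cnj (v i) * complex_of_real (g i) * v j else 0)"
          by (rule sum.cong) (auto simp: P0_def)
        also have "\<dots> = cnj (v i) * v i * complex_of_real (g i)" by (simp add: mult_ac)
        finally show ?thesis by (simp add: cnj_mult_self)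
      qed
      have "qf P0 v = complex_of_real (\<Sum>i\<in>UNIV. (cmod (v i))^2 * g i)"
        unfolding qf_def inner by simp
      thus ?thesis using g0 by (simp add: sum_nonneg)
    qed
    ultimately show ?thesis by (simp add: psd_iff)
  qed
  have P0sq: "mmult P0 P0 = mmult (adjoint M0) M0"
  proof (intro ext)
    fix p p'
    have l: "mmult P0 P0 p p' = (if p = p' then complex_of_real ((g p)^2) else 0)"
    proof -
      have "mmult P0 P0 p p' = (\<Sum>r\<in>UNIV. if r = p then P0 p r * P0 r p' else 0)"
        unfolding mmult_def by (rule sum.cong) (auto simp: P0_def)
      also have "\<dots> = P0 p p * P0 p p'" by simp
      finally show ?thesis by (simp add: P0_def power2_eq_square)
    qed
    have r: "mmult (adjoint M0) M0 p p' = (\<Sum>r\<in>UNIV. M0 p r * M0 r p')"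
      unfolding herm mmult_def ..
    show "mmult P0 P0 p p' = mmult (adjoint M0) M0 p p'"
    proof (cases "p = p'")
      case True
      have "(\<Sum>r\<in>UNIV. M0 p r * M0 r p) = (\<Sum>r\<in>UNIV. complex_of_real ((cmod (M0 p r))^2))"
      proof (rule sum.cong[OF refl])
        fix r
        show "M0 p r * M0 r p = complex_of_real ((cmod (M0 p r))^2)"
          using hM[of r p] complex_norm_square[of "M0 p r"] by simp
      qed
      also have "\<dots> = complex_of_real ((g p)^2)"
        unfolding g_def using mono by (simp add: sum_single_sq[of "M0 p"] del: of_real_power)
      finally show ?thesis using l r True by simp
    next
      case False
      have "M0 p r * M0 r p' = 0" for r
      proof (rule ccontr)
        assume "M0 p r * M0 r p' \<noteq> 0"
        hence "M0 r p \<noteq> 0" "M0 r p' \<noteq> 0" using hM[of r p] by auto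
        thus False using mono False by blast
      qed
      hence "(\<Sum>r\<in>UNIV. M0 p r * M0 r p') = 0" by (simp only: sum.neutral_const)
      thus ?thesis using l r False by simp
    qed
  qed
  define P where "P = mmult (mmult U P0) (adjoint U)"
  have "psd P" unfolding P_def by (rule psd_conj[OF psdP0])
  moreover have "mmult P P = mmult (adjoint (mmult (mmult U M0) (adjoint U))) (mmult (mmult U M0) (adjoint U))"
  proof -
    have "mmult P P = mmult (mmult U (mmult P0 P0)) (adjoint U)"
      unfolding P_def by (simp add: mmult_assoc flip: mmult_assoc[of "adjoint U" U] add: unit)
    also have "\<dots> = mmult (mmult U (mmult M0 M0)) (adjoint U)" using P0sq herm by simp
    also have "\<dots> = mmult (adjoint (mmult (mmult U M0) (adjoint U))) (mmult (mmult U M0) (adjoint U))"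
      by (simp add: adjoint_mmult herm mmult_assoc flip: mmult_assoc[of "adjoint U" U] add: unit)
    finally show ?thesis .
  qed
  ultimately have "trace_norm (mmult (mmult U M0) (adjoint U)) = Re (mtrace P)" by (rule trace_norm_eq)
  also have "mtrace P = mtrace P0"
  proof -
    have "mtrace P = mtrace (mmult U (mmult P0 (adjoint U)))" unfolding P_def by (simp add: mmult_assoc)
    also have "\<dots> = mtrace (mmult (mmult P0 (adjoint U)) U)" by (rule mtrace_comm)
    also have "\<dots> = mtrace P0" by (simp add: mmult_assoc unit)
    finally show ?thesis .
  qed
  also have "mtrace P0 = complex_of_real (\<Sum>p\<in>UNIV. g p)" unfolding mtrace_def P0_def by simp
  finally show ?thesis unfolding g_def by simp
qed




lemma ortho_complete:
  fixes s :: "'d::finite \<Rightarrow> 'd \<Rightarrow> complex"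
  assumes "orthonormal_basis s"
  shows "(\<Sum>k\<in>UNIV. s k i * cnj (s k j)) = (if i = j then 1 else 0)"
proof -
  define A :: "complex^'d^'d" where "A = (\<chi> k i. cnj (s k i))"
  define A' :: "complex^'d^'d" where "A' = (\<chi> i l. s l i)"
  have "A ** A' = mat 1"
    using assms unfolding orthonormal_basis_def
    by (simp add: vec_eq_iff matrix_matrix_mult_def mat_def A_def A'_def)
  hence "A' ** A = mat 1" by (rule matrix_left_right_inverse1)
  hence "(A' ** A)$i$j = (mat 1 :: complex^'d^'d)$i$j" by simp
  thus ?thesis by (simp add: matrix_matrix_mult_def mat_def A_def A'_def)
qed

lemma if10_mult: "(if P then 1 else 0) * (x::'a::semiring_1) = (if P then x else 0)" by simp
lemma mult_if10: "(x::'a::semiring_1) * (if P then 1 else 0) = (if P then x else 0)" by simp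
lemma mult_if0: "(x::'a::semiring_1) * (if P then y else 0) = (if P then x * y else 0)" by simp
lemma if0_mult: "(if P then y else 0) * (x::'a::semiring_1) = (if P then y * x else 0)" by simp
lemma cnj_if10: "cnj (if P then 1 else 0) = (if P then 1 else 0)" by simp
lemma cnj_if: "cnj (if P then a else 0) = (if P then cnj a else 0)" by simp
lemma sum_if_const: "(\<Sum>x\<in>A. if P then f x else 0) = (if P then (\<Sum>x\<in>A. f x) else (0::'a::comm_monoid_add))" by simp

lemma if_conj0: "(if P \<and> Q then x else 0) = (if P then (if Q then x else 0) else (0::'a::zero))" by simp

lemmas dsimps = if_conj0 cnj_if10 if10_mult mult_if10 mult_if0 if0_mult cnj_if sum_if_const

lemma meas_A_state_eq:
  "meas_A_state s \<rho> ((a,b),k) ((a',b'),k') =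
     s k a * cnj (s k' a') * (\<Sum>j\<in>UNIV. \<Sum>j'\<in>UNIV. cnj (s k j) * \<rho> (j,b) (j',b') * s k' j')"
  unfolding meas_A_state_def Let_def mmult_def kron_def meas_iso_def adjoint_def
  apply (simp add: sum_UNIV_prod idop_def)
  apply (simp add: sum_distrib_left sum_distrib_right dsimps mult_ac)
  apply (rule sum.swap)
  done

lemma werner_inner:
  fixes s :: "'d::finite \<Rightarrow> 'd \<Rightarrow> complex"
  assumes on: "orthonormal_basis s"
  shows "(\<Sum>j\<in>UNIV. \<Sum>j'\<in>UNIV. cnj (s k j) * (werner \<beta> :: ('d\<times>'d,'d\<times>'d) op) (j,b) (j',b') * s k' j') =
    ((if k = k' \<and> b = b' then 1 else 0) + complex_of_real \<beta> * cnj (s k b') * s k' b) /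
      complex_of_real ((real CARD('d))\<^sup>2 + real CARD('d) * \<beta>)"
proof -
  have o: "\<And>k k'. (\<Sum>j\<in>UNIV. cnj (s k j) * s k' j) = (if k = k' then 1 else 0)"
    using on unfolding orthonormal_basis_def by blast
  have S1: "(\<Sum>j\<in>UNIV. \<Sum>j'\<in>UNIV. cnj (s k j) * idop (j,b) (j',b') * s k' j') = (if k = k' \<and> b = b' then 1 else 0)"
    unfolding idop_def by (simp add: dsimps o)
  have S2: "(\<Sum>j\<in>UNIV. \<Sum>j'\<in>UNIV. cnj (s k j) * swap_op (j,b) (j',b') * s k' j') = cnj (s k b') * s k' b"
    unfolding swap_op_def by (simp add: dsimps)
  have "(\<Sum>j\<in>UNIV. \<Sum>j'\<in>UNIV. cnj (s k j) * (werner \<beta> :: ('d\<times>'d,'d\<times>'d) op) (j,b) (j',b') * s k' j') =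
    ((\<Sum>j\<in>UNIV. \<Sum>j'\<in>UNIV. cnj (s k j) * idop (j,b) (j',b') * s k' j') + complex_of_real \<beta> * (\<Sum>j\<in>UNIV. \<Sum>j'\<in>UNIV. cnj (s k j) * swap_op (j,b) (j',b') * s k' j')) /
      complex_of_real ((real CARD('d))\<^sup>2 + real CARD('d) * \<beta>)"
  proof -
    define N where "N = complex_of_real ((real CARD('d))\<^sup>2 + real CARD('d) * \<beta>)"
    have e: "cnj (s k j) * (werner \<beta> :: ('d\<times>'d,'d\<times>'d) op) (j,b) (j',b') * s k' j' = (cnj (s k j) * idop (j,b) (j',b') * s k' j' + complex_of_real \<beta> * (cnj (s k j) * swap_op (j,b) (j',b') * s k' j')) / N" for j j'
      unfolding werner_def N_def by (simp add: divide_inverse algebra_simps)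
    show ?thesis unfolding e N_def[symmetric]
      by (simp only: sum_divide_distrib[symmetric] sum.distrib sum_distrib_left)
  qed
  thus ?thesis using S1 S2 by (simp add: mult.assoc)
qed


lemma MA_eq:
  fixes s :: "'d::finite \<Rightarrow> 'd \<Rightarrow> complex"
  assumes "orthonormal_basis s"
  shows "ptrans (meas_A_state s (werner \<beta> :: ('d\<times>'d,'d\<times>'d) op)) ((a,b),k) ((a',b'),k') =
    s k' a * cnj (s k a') * ((if k' = k \<and> b = b' then 1 else 0) + complex_of_real \<beta> * cnj (s k' b') * s k b) /
      complex_of_real ((real CARD('d))\<^sup>2 + real CARD('d) * \<beta>)"
  by (simp add: ptrans_def meas_A_state_eq werner_inner[OF assms])

definition smul :: "complex \<Rightarrow> ('a,'b) op \<Rightarrow> ('a,'b) op" where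
  "smul c M = (\<lambda>i j. c * M i j)"

lemma mmult_smul_left: "mmult (smul c A) B = smul c (mmult A B)"
  unfolding mmult_def smul_def by (simp add: sum_distrib_left mult.assoc)

lemma mmult_smul_right: "mmult A (smul c B) = smul c (mmult A B)"
  unfolding mmult_def smul_def by (simp add: sum_distrib_left mult_ac)

lemma sum3_prod: "(\<Sum>a\<in>A. \<Sum>b\<in>B. \<Sum>m\<in>C. f a * g b * h m) = (\<Sum>a\<in>A. f a) * (\<Sum>b\<in>B. g b) * (\<Sum>m\<in>C. (h m :: complex))"
proof -
  have 1: "(\<Sum>b\<in>B. \<Sum>m\<in>C. g b * h m) = (\<Sum>b\<in>B. g b) * (\<Sum>m\<in>C. h m)" by (simp add: sum_product)
  have "(\<Sum>a\<in>A. \<Sum>b\<in>B. \<Sum>m\<in>C. f a * g b * h m) = (\<Sum>a\<in>A. f a * (\<Sum>b\<in>B. \<Sum>m\<in>C. g b * h m))"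
    by (simp add: sum_distrib_left mult.assoc)
  also have "\<dots> = (\<Sum>a\<in>A. f a) * ((\<Sum>b\<in>B. g b) * (\<Sum>m\<in>C. h m))" by (simp only: 1 sum_distrib_right)
  finally show ?thesis by (simp add: mult.assoc)
qed

definition UA :: "('d::finite \<Rightarrow> 'd \<Rightarrow> complex) \<Rightarrow> (('d\<times>'d)\<times>'d, ('d\<times>'d)\<times>'d) op" where
  "UA s = (\<lambda>((a,b),m) ((k,l),m'). s k a * s l b * (if m = m' then 1 else 0))"

definition K0A :: "real \<Rightarrow> (('d::finite\<times>'d)\<times>'d, ('d\<times>'d)\<times>'d) op" where
  "K0A \<beta> = (\<lambda>((k,l),m) ((k',l'),m'). if k = m' \<and> m = k' then
      ((if m = m' \<and> l = l' then 1 else 0) + complex_of_real \<beta> * (if l = m \<and> m' = l' then 1 else 0)) else 0)"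

lemma UA_unit:
  fixes s :: "'d::finite \<Rightarrow> 'd \<Rightarrow> complex"
  assumes "orthonormal_basis s"
  shows "mmult (adjoint (UA s)) (UA s) = idop"
proof (intro ext)
  fix y y' :: "('d\<times>'d)\<times>'d"
  obtain k l n where y: "y = ((k,l),n)" by (metis prod.exhaust)
  obtain k' l' n' where y': "y' = ((k',l'),n')" by (metis prod.exhaust)
  have o: "\<And>k k'. (\<Sum>j\<in>UNIV. cnj (s k j) * s k' j) = (if k = k' then 1 else 0)"
    using assms unfolding orthonormal_basis_def by blast
  have "mmult (adjoint (UA s)) (UA s) y y' = (\<Sum>a\<in>UNIV. \<Sum>b\<in>UNIV. \<Sum>m\<in>UNIV.
      (cnj (s k a) * s k' a) * (cnj (s l b) * s l' b) * (cnj (if m = n then 1 else 0) * (if m = n' then 1 else 0)))"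
    unfolding y y' mmult_def adjoint_def UA_def by (simp add: sum_UNIV_prod mult_ac)
  also have "\<dots> = idop y y'"
    unfolding sum3_prod o y y' idop_def by (simp add: dsimps)
  finally show "mmult (adjoint (UA s)) (UA s) y y' = idop y y'" .
qed

lemma UA_left:
  "mmult (UA s) X ((a,b),m) y = (\<Sum>k\<in>UNIV. \<Sum>l\<in>UNIV. s k a * s l b * X ((k,l),m) y)"
  unfolding mmult_def UA_def by (simp add: sum_UNIV_prod dsimps)

lemma UA_right:
  "mmult Y (adjoint (UA s)) x ((a',b'),m') = (\<Sum>k'\<in>UNIV. \<Sum>l'\<in>UNIV. Y x ((k',l'),m') * cnj (s k' a') * cnj (s l' b'))"
  unfolding mmult_def adjoint_def UA_def by (simp add: sum_UNIV_prod dsimps mult_ac)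


lemma K0A_inner:
  "(\<Sum>k\<in>UNIV. \<Sum>l\<in>UNIV. s k a * s l b * K0A \<beta> ((k,l),m) ((k',l'),m')) =
    (if m = k' then s m' a * ((if m = m' then s l' b else 0) + complex_of_real \<beta> * (if m' = l' then s m b else 0)) else 0)"
  unfolding K0A_def by (simp add: dsimps distrib_left sum.distrib)

lemma UA_conj0:
  fixes s :: "'d::finite \<Rightarrow> 'd \<Rightarrow> complex"
  assumes "orthonormal_basis s"
  shows "mmult (mmult (UA s) (K0A \<beta>)) (adjoint (UA s)) ((a,b),m) ((a',b'),m') =
     s m' a * cnj (s m a') * ((if m' = m \<and> b = b' then 1 else 0) + complex_of_real \<beta> * cnj (s m' b') * s m b)"
proof -
  have c: "\<And>i j. (\<Sum>k\<in>UNIV. s k i * cnj (s k j)) = (if i = j then 1 else 0)"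
    using ortho_complete[OF assms] by blast
  have "mmult (mmult (UA s) (K0A \<beta>)) (adjoint (UA s)) ((a,b),m) ((a',b'),m') =
     (\<Sum>l'\<in>UNIV. s m' a * ((if m = m' then s l' b else 0) + complex_of_real \<beta> * (if m' = l' then s m b else 0)) * cnj (s m a') * cnj (s l' b'))"
    unfolding UA_right UA_left K0A_inner by (simp add: dsimps)
  also have "\<dots> = s m' a * cnj (s m a') * ((if m = m' then (\<Sum>l'\<in>UNIV. s l' b * cnj (s l' b')) else 0) + complex_of_real \<beta> * s m b * cnj (s m' b'))"
    by (simp add: dsimps distrib_left distrib_right sum.distrib sum_distrib_left mult_ac)
  also have "\<dots> = s m' a * cnj (s m a') * ((if m' = m \<and> b = b' then 1 else 0) + complex_of_real \<beta> * cnj (s m' b') * s m b)"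
    by (simp add: c mult_ac)
  finally show ?thesis .
qed


lemma smul_conj: "mmult (mmult U (smul c M)) V = smul c (mmult (mmult U M) V)"
  by (simp add: mmult_smul_left mmult_smul_right)

definition sigA :: "('d\<times>'d)\<times>'d \<Rightarrow> ('d\<times>'d)\<times>'d" where
  "sigA p = (case p of ((k,l),m) \<Rightarrow> ((m, if k = m then l else k), k))"

lemma K0A_supp0: assumes "K0A \<beta> ((k,l),m) ((k',l'),m') \<noteq> 0" shows "((k',l'),m') = sigA ((k,l),m)"
  using assms unfolding K0A_def sigA_def by (simp split: if_splits)

lemma K0A_supp: "K0A \<beta> p q \<noteq> 0 \<Longrightarrow> q = sigA p"
proof -
  assume a: "K0A \<beta> p q \<noteq> 0"
  obtain k l m where p: "p = ((k,l),m)" by (metis prod.exhaust)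
  obtain k' l' m' where q: "q = ((k',l'),m')" by (metis prod.exhaust)
  show ?thesis using K0A_supp0[of \<beta> k l m k' l' m'] a unfolding p q by blast
qed

lemma K0A_apply: "K0A \<beta> ((k,l),m) ((k',l'),m') = (if k = m' \<and> m = k' then
      ((if m = m' \<and> l = l' then 1 else 0) + complex_of_real \<beta> * (if l = m \<and> m' = l' then 1 else 0)) else 0)"
  by (simp add: K0A_def)

lemma K0A_herm_sp: "cnj (K0A \<beta> ((k',l'),m') ((m',l),k')) = K0A \<beta> ((m',l),k') ((k',l'),m')"
proof -
  have c1: "(m' = k' \<and> l' = l) = (k' = m' \<and> l = l')" by blast
  have c2: "(l' = m' \<and> k' = l) = (l = k' \<and> m' = l')" by blast
  show ?thesis unfolding K0A_apply
    by (simp only: simp_thms if_True c1 c2 complex_cnj_add complex_cnj_mult cnj_if10 complex_cnj_complex_of_real)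
qed

lemma K0A_herm0: "cnj (K0A \<beta> ((k',l'),m') ((k,l),m)) = K0A \<beta> ((k,l),m) ((k',l'),m')"
proof (cases "k = m' \<and> m = k'")
  case True
  then show ?thesis using K0A_herm_sp[of \<beta> k' l' m' l] by blast
next
  case False
  have t: "\<not> (k' = m \<and> m' = k)" using False by blast
  show ?thesis unfolding K0A_apply by (simp only: t False if_False complex_cnj_zero)
qed

lemma K0A_herm: "adjoint (K0A \<beta>) = K0A \<beta>"
  unfolding adjoint_def fun_eq_iff
proof (intro allI)
  fix p q :: "('d::finite\<times>'d)\<times>'d"
  obtain k l m where p: "p = ((k,l),m)" by (metis prod.exhaust)
  obtain k' l' m' where q: "q = ((k',l'),m')" by (metis prod.exhaust)
  show "cnj (K0A \<beta> q p) = K0A \<beta> p q" unfolding p q by (rule K0A_herm0)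
qed

lemma K0A_sig: "K0A \<beta> ((k,l),m) (sigA ((k,l),m)) =
   (if k = m then 1 + (if l = k then complex_of_real \<beta> else 0) else (if l = m then complex_of_real \<beta> else 0))"
  unfolding K0A_def sigA_def by simp



definition ip :: "('d::finite \<Rightarrow> complex) \<Rightarrow> ('d \<Rightarrow> complex) \<Rightarrow> complex" where
  "ip u v = (\<Sum>j\<in>UNIV. cnj (u j) * v j)"

lemma cnj_ip: "cnj (ip u v) = ip v u"
  unfolding ip_def by (simp add: mult.commute)

lemma sum4_swap: "(\<Sum>a\<in>A. \<Sum>b\<in>B. \<Sum>c\<in>C. \<Sum>d\<in>D. f a b c d) = (\<Sum>c\<in>C. \<Sum>d\<in>D. \<Sum>a\<in>A. \<Sum>b\<in>B. (f a b c d :: 'z::comm_monoid_add))"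
proof -
  have "(\<Sum>a\<in>A. \<Sum>b\<in>B. \<Sum>c\<in>C. \<Sum>d\<in>D. f a b c d) = (\<Sum>a\<in>A. \<Sum>c\<in>C. \<Sum>b\<in>B. \<Sum>d\<in>D. f a b c d)"
    by (rule sum.cong[OF refl], rule sum.swap)
  also have "\<dots> = (\<Sum>c\<in>C. \<Sum>a\<in>A. \<Sum>b\<in>B. \<Sum>d\<in>D. f a b c d)" by (rule sum.swap)
  also have "\<dots> = (\<Sum>c\<in>C. \<Sum>a\<in>A. \<Sum>d\<in>D. \<Sum>b\<in>B. f a b c d)"
    by (rule sum.cong[OF refl], rule sum.cong[OF refl], rule sum.swap)
  also have "\<dots> = (\<Sum>c\<in>C. \<Sum>d\<in>D. \<Sum>a\<in>A. \<Sum>b\<in>B. f a b c d)"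
    by (rule sum.cong[OF refl], rule sum.swap)
  finally show ?thesis .
qed

lemma meas_AB_state_eq:
  "meas_AB_state s t \<rho> ((a,b),(k,l)) ((a',b'),(k',l')) =
     s k a * t l b * cnj (s k' a') * cnj (t l' b') *
     (\<Sum>j\<in>UNIV. \<Sum>j2\<in>UNIV. \<Sum>j'\<in>UNIV. \<Sum>j2'\<in>UNIV. cnj (s k j) * cnj (t l j2) * \<rho> (j,j2) (j',j2') * s k' j' * t l' j2')"
  unfolding meas_AB_state_def Let_def mmult_def kron_def meas_iso_def adjoint_def
  apply (simp add: sum_UNIV_prod)
  apply (simp add: sum_distrib_left sum_distrib_right mult_ac)
  apply (rule sum4_swap)
  done


lemma werner_inner_AB:
  fixes s t :: "'d::finite \<Rightarrow> 'd \<Rightarrow> complex"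
  assumes os: "orthonormal_basis s" and ot: "orthonormal_basis t"
  shows "(\<Sum>j\<in>UNIV. \<Sum>j2\<in>UNIV. \<Sum>j'\<in>UNIV. \<Sum>j2'\<in>UNIV. cnj (s k j) * cnj (t l j2) * (werner \<beta> :: ('d\<times>'d,'d\<times>'d) op) (j,j2) (j',j2') * s k' j' * t l' j2') =
    ((if k = k' \<and> l = l' then 1 else 0) + complex_of_real \<beta> * (ip (s k) (t l') * ip (t l) (s k'))) /
      complex_of_real ((real CARD('d))\<^sup>2 + real CARD('d) * \<beta>)"
proof -
  have o1: "\<And>k k'. (\<Sum>j\<in>UNIV. cnj (s k j) * s k' j) = (if k = k' then 1 else 0)"
    using os unfolding orthonormal_basis_def by blast
  have o2: "\<And>k k'. (\<Sum>j\<in>UNIV. cnj (t k j) * t k' j) = (if k = k' then 1 else 0)"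
    using ot unfolding orthonormal_basis_def by blast
  have S1: "(\<Sum>j\<in>UNIV. \<Sum>j2\<in>UNIV. \<Sum>j'\<in>UNIV. \<Sum>j2'\<in>UNIV. cnj (s k j) * cnj (t l j2) * idop (j,j2) (j',j2') * s k' j' * t l' j2') = (if k = k' \<and> l = l' then 1 else 0)"
  proof -
    have "(\<Sum>j\<in>UNIV. \<Sum>j2\<in>UNIV. \<Sum>j'\<in>UNIV. \<Sum>j2'\<in>UNIV. cnj (s k j) * cnj (t l j2) * idop (j,j2) (j',j2') * s k' j' * t l' j2')
       = (\<Sum>j\<in>UNIV. \<Sum>j2\<in>UNIV. (cnj (s k j) * s k' j) * (cnj (t l j2) * t l' j2))"
      unfolding idop_def by (simp add: dsimps mult_ac)
    also have "\<dots> = (\<Sum>j\<in>UNIV. cnj (s k j) * s k' j) * (\<Sum>j2\<in>UNIV. cnj (t l j2) * t l' j2)"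
      by (simp add: sum_product)
    finally show ?thesis by (simp add: o1 o2)
  qed
  have S2: "(\<Sum>j\<in>UNIV. \<Sum>j2\<in>UNIV. \<Sum>j'\<in>UNIV. \<Sum>j2'\<in>UNIV. cnj (s k j) * cnj (t l j2) * swap_op (j,j2) (j',j2') * s k' j' * t l' j2') = ip (s k) (t l') * ip (t l) (s k')"
  proof -
    have "(\<Sum>j\<in>UNIV. \<Sum>j2\<in>UNIV. \<Sum>j'\<in>UNIV. \<Sum>j2'\<in>UNIV. cnj (s k j) * cnj (t l j2) * swap_op (j,j2) (j',j2') * s k' j' * t l' j2')
       = (\<Sum>j\<in>UNIV. \<Sum>j2\<in>UNIV. (cnj (s k j) * t l' j) * (cnj (t l j2) * s k' j2))"
      unfolding swap_op_def by (simp add: dsimps mult_ac)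
    also have "\<dots> = ip (s k) (t l') * ip (t l) (s k')"
      unfolding ip_def by (simp add: sum_product)
    finally show ?thesis .
  qed
  define N where "N = complex_of_real ((real CARD('d))\<^sup>2 + real CARD('d) * \<beta>)"
  have e: "cnj (s k j) * cnj (t l j2) * (werner \<beta> :: ('d\<times>'d,'d\<times>'d) op) (j,j2) (j',j2') * s k' j' * t l' j2'
     = (cnj (s k j) * cnj (t l j2) * idop (j,j2) (j',j2') * s k' j' * t l' j2' + complex_of_real \<beta> * (cnj (s k j) * cnj (t l j2) * swap_op (j,j2) (j',j2') * s k' j' * t l' j2')) / N" for j j2 j' j2'
    unfolding werner_def N_def by (simp add: divide_inverse algebra_simps)
  show ?thesis unfolding e N_def[symmetric] S1[symmetric] S2[symmetric]
    by (simp only: sum_divide_distrib[symmetric] sum.distrib sum_distrib_left)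
qed


lemma MAB_eq:
  fixes s t :: "'d::finite \<Rightarrow> 'd \<Rightarrow> complex"
  assumes os: "orthonormal_basis s" and ot: "orthonormal_basis t"
  shows "ptrans (meas_AB_state s t (werner \<beta> :: ('d\<times>'d,'d\<times>'d) op)) ((a,b),(k,l)) ((a',b'),(k',l')) =
    s k' a * t l' b * cnj (s k a') * cnj (t l b') *
     (((if k' = k \<and> l' = l then 1 else 0) + complex_of_real \<beta> * (ip (s k') (t l) * ip (t l') (s k))) /
      complex_of_real ((real CARD('d))\<^sup>2 + real CARD('d) * \<beta>))"
  by (simp add: ptrans_def meas_AB_state_eq werner_inner_AB[OF os ot])

definition UG :: "('d::finite \<Rightarrow> 'd \<Rightarrow> complex) \<Rightarrow> ('d \<Rightarrow> 'd \<Rightarrow> complex) \<Rightarrow> (('d\<times>'d)\<times>'e, ('d\<times>'d)\<times>'e) op" where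
  "UG s t = (\<lambda>((a,b),m) ((k,l),m'). s k a * t l b * (if m = m' then 1 else 0))"

lemma UG_unit:
  fixes s t :: "'d::finite \<Rightarrow> 'd \<Rightarrow> complex"
  assumes os: "orthonormal_basis s" and ot: "orthonormal_basis t"
  shows "mmult (adjoint (UG s t)) (UG s t :: (('d\<times>'d)\<times>'e::finite, ('d\<times>'d)\<times>'e) op) = idop"
proof (intro ext)
  fix y y' :: "('d\<times>'d)\<times>'e"
  obtain k l n where y: "y = ((k,l),n)" by (metis prod.exhaust)
  obtain k' l' n' where y': "y' = ((k',l'),n')" by (metis prod.exhaust)
  have o1: "\<And>k k'. (\<Sum>j\<in>UNIV. cnj (s k j) * s k' j) = (if k = k' then 1 else 0)"
    using os unfolding orthonormal_basis_def by blast
  have o2: "\<And>k k'. (\<Sum>j\<in>UNIV. cnj (t k j) * t k' j) = (if k = k' then 1 else 0)"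
    using ot unfolding orthonormal_basis_def by blast
  have "mmult (adjoint (UG s t)) (UG s t :: (('d\<times>'d)\<times>'e::finite, ('d\<times>'d)\<times>'e) op) y y' = (\<Sum>a\<in>UNIV. \<Sum>b\<in>UNIV. \<Sum>m\<in>UNIV.
      (cnj (s k a) * s k' a) * (cnj (t l b) * t l' b) * (cnj (if m = n then 1 else 0) * (if m = n' then 1 else 0)))"
    unfolding y y' mmult_def adjoint_def UG_def by (simp add: sum_UNIV_prod mult_ac)
  also have "\<dots> = idop y y'"
    unfolding sum3_prod o1 o2 y y' idop_def by (simp add: dsimps)
  finally show "mmult (adjoint (UG s t)) (UG s t :: (('d\<times>'d)\<times>'e::finite, ('d\<times>'d)\<times>'e) op) y y' = idop y y'" .
qed

lemma UG_left:
  "mmult (UG s t) X ((a,b),m) y = (\<Sum>k\<in>UNIV. \<Sum>l\<in>UNIV. s k a * t l b * X ((k,l),m) y)"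
  unfolding mmult_def UG_def by (simp add: sum_UNIV_prod dsimps)

lemma UG_right:
  "mmult Y (adjoint (UG s t)) x ((a',b'),m') = (\<Sum>k'\<in>UNIV. \<Sum>l'\<in>UNIV. Y x ((k',l'),m') * cnj (s k' a') * cnj (t l' b'))"
  unfolding mmult_def adjoint_def UG_def by (simp add: sum_UNIV_prod dsimps mult_ac)

definition KB :: "('d::finite \<Rightarrow> 'd \<Rightarrow> complex) \<Rightarrow> ('d \<Rightarrow> 'd \<Rightarrow> complex) \<Rightarrow> real \<Rightarrow> (('d\<times>'d)\<times>('d\<times>'d), ('d\<times>'d)\<times>('d\<times>'d)) op" where
  "KB s t \<beta> = (\<lambda>((k,l),(m,n)) ((k',l'),(m',n')). if k = m' \<and> l = n' \<and> m = k' \<and> n = l' then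
      ((if m = m' \<and> n = n' then 1 else 0) + complex_of_real \<beta> * (ip (s m') (t n) * ip (t n') (s m))) else 0)"

lemma KB_apply: "KB s t \<beta> ((k,l),(m,n)) ((k',l'),(m',n')) = (if k = m' \<and> l = n' \<and> m = k' \<and> n = l' then
      ((if m = m' \<and> n = n' then 1 else 0) + complex_of_real \<beta> * (ip (s m') (t n) * ip (t n') (s m))) else 0)"
  by (simp add: KB_def)

lemma KB_inner:
  "(\<Sum>k\<in>UNIV. \<Sum>l\<in>UNIV. s k a * t l b * KB s t \<beta> ((k,l),(m,n)) ((k',l'),(m',n'))) =
    (if m = k' \<and> n = l' then s m' a * t n' b * ((if m = m' \<and> n = n' then 1 else 0) + complex_of_real \<beta> * (ip (s m') (t n) * ip (t n') (s m))) else 0)"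
  unfolding KB_apply by (simp add: dsimps)

lemma UG_conjB:
  "mmult (mmult (UG s t) (KB s t \<beta>)) (adjoint (UG s t)) ((a,b),(m,n)) ((a',b'),(m',n')) =
     s m' a * t n' b * cnj (s m a') * cnj (t n b') * ((if m = m' \<and> n = n' then 1 else 0) + complex_of_real \<beta> * (ip (s m') (t n) * ip (t n') (s m)))"
  unfolding UG_right UG_left KB_inner by (simp add: dsimps mult_ac)



lemma adjoint_smul: "adjoint (smul c M) = smul (cnj c) (adjoint M)"
  unfolding adjoint_def smul_def by auto

definition sigB :: "('a\<times>'a) \<Rightarrow> ('a\<times>'a)" where "sigB p = (snd p, fst p)"

lemma KB_supp: "KB s t \<beta> p q \<noteq> 0 \<Longrightarrow> q = sigB p"
proof -
  assume a: "KB s t \<beta> p q \<noteq> 0"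
  obtain k l m n where p: "p = ((k,l),(m,n))" by (metis prod.exhaust)
  obtain k' l' m' n' where q: "q = ((k',l'),(m',n'))" by (metis prod.exhaust)
  have "k = m' \<and> l = n' \<and> m = k' \<and> n = l'"
    using a unfolding p q KB_apply by (simp split: if_splits)
  thus ?thesis unfolding p q sigB_def by simp
qed

lemma KB_sig: "KB s t \<beta> ((k,l),(m,n)) ((m,n),(k,l)) =
   (if m = k \<and> n = l then 1 else 0) + complex_of_real \<beta> * (ip (s k) (t n) * ip (t l) (s m))"
  unfolding KB_apply by simp

lemma KB_herm: "adjoint (KB s t \<beta>) = KB s t \<beta>"
  unfolding adjoint_def fun_eq_iff
proof (intro allI)
  fix p q :: "('a::finite\<times>'a)\<times>('a\<times>'a)"
  show "cnj (KB s t \<beta> q p) = KB s t \<beta> p q"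
  proof (cases "q = sigB p")
    case True
    obtain k l m n where p: "p = ((k,l),(m,n))" by (metis prod.exhaust)
    have q: "q = ((m,n),(k,l))" using True unfolding p sigB_def by simp
    have c: "(k = m \<and> l = n) = (m = k \<and> n = l)" by blast
    show ?thesis unfolding p q KB_sig
      by (simp only: complex_cnj_add complex_cnj_mult cnj_ip cnj_if10 complex_cnj_complex_of_real c mult.commute[of "ip (t l) (s m)"])
  next
    case False
    have "KB s t \<beta> p q = 0" using KB_supp False by blast
    moreover have "KB s t \<beta> q p = 0"
    proof (rule ccontr)
      assume "KB s t \<beta> q p \<noteq> 0"
      hence "p = sigB q" by (rule KB_supp)
      hence "q = sigB p" unfolding sigB_def by auto
      thus False using False by simp
    qed
    ultimately show ?thesis by simp
  qed
qed


lemma sum3_rev: "(\<Sum>l\<in>A. \<Sum>m\<in>B. \<Sum>n\<in>C. f l m n) = (\<Sum>n\<in>C. \<Sum>m\<in>B. \<Sum>l\<in>A. (f l m n :: 'z::comm_monoid_add))"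
proof -
  have "(\<Sum>l\<in>A. \<Sum>m\<in>B. \<Sum>n\<in>C. f l m n) = (\<Sum>m\<in>B. \<Sum>l\<in>A. \<Sum>n\<in>C. f l m n)" by (rule sum.swap)
  also have "\<dots> = (\<Sum>m\<in>B. \<Sum>n\<in>C. \<Sum>l\<in>A. f l m n)" by (rule sum.cong[OF refl], rule sum.swap)
  also have "\<dots> = (\<Sum>n\<in>C. \<Sum>m\<in>B. \<Sum>l\<in>A. f l m n)" by (rule sum.swap)
  finally show ?thesis .
qed

lemma parseval:
  fixes s t :: "'d::finite \<Rightarrow> 'd \<Rightarrow> complex"
  assumes os: "orthonormal_basis s" and ot: "orthonormal_basis t"
  shows "(\<Sum>n\<in>UNIV. (cmod (ip (s k) (t n)))\<^sup>2) = 1"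
proof -
  have c: "\<And>i j. (\<Sum>n\<in>UNIV. t n i * cnj (t n j)) = (if i = j then 1 else 0)"
    using ortho_complete[OF ot] by blast
  have o1: "(\<Sum>j\<in>UNIV. cnj (s k j) * s k j) = 1"
    using os unfolding orthonormal_basis_def by simp
  have "complex_of_real (\<Sum>n\<in>UNIV. (cmod (ip (s k) (t n)))\<^sup>2) = (\<Sum>n\<in>UNIV. ip (s k) (t n) * cnj (ip (s k) (t n)))"
    by (simp only: of_real_sum complex_norm_square)
  also have "\<dots> = (\<Sum>n\<in>UNIV. \<Sum>j\<in>UNIV. \<Sum>j'\<in>UNIV. cnj (s k j) * s k j' * (t n j * cnj (t n j')))"
    unfolding ip_def by (simp add: sum_distrib_left sum_distrib_right mult_ac)
  also have "\<dots> = (\<Sum>j\<in>UNIV. \<Sum>j'\<in>UNIV. \<Sum>n\<in>UNIV. cnj (s k j) * s k j' * (t n j * cnj (t n j')))"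
    by (rule sum3_rev[THEN trans], rule sum.swap)
  also have "\<dots> = (\<Sum>j\<in>UNIV. \<Sum>j'\<in>UNIV. cnj (s k j) * s k j' * (if j = j' then 1 else 0))"
    by (simp only: sum_distrib_left[symmetric] c)
  also have "\<dots> = 1" using o1 by (simp add: dsimps)
  finally show ?thesis by (simp only: of_real_eq_1_iff)
qed

lemma ip_le1:
  fixes s t :: "'d::finite \<Rightarrow> 'd \<Rightarrow> complex"
  assumes os: "orthonormal_basis s" and ot: "orthonormal_basis t"
  shows "cmod (ip (s k) (t n)) \<le> 1"
proof -
  have "(cmod (ip (s k) (t n)))\<^sup>2 \<le> (\<Sum>n\<in>UNIV. (cmod (ip (s k) (t n)))\<^sup>2)"
    by (rule member_le_sum) auto
  hence "(cmod (ip (s k) (t n)))\<^sup>2 \<le> 1" using parseval[OF os ot] by simp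
  thus ?thesis by (simp add: power_le_one_iff abs_le_iff power2_le_iff_abs_le)
qed


lemma QAB_trace_norm:
  fixes s t :: "'d::finite \<Rightarrow> 'd \<Rightarrow> complex"
  assumes os: "orthonormal_basis s" and ot: "orthonormal_basis t" and b1: "\<bar>\<beta>\<bar> \<le> 1" and d2: "CARD('d) \<ge> 2"
  shows "trace_norm (ptrans (meas_AB_state s t (werner \<beta> :: ('d\<times>'d,'d\<times>'d) op))) =
    ((real CARD('d))\<^sup>2 + (\<beta> - \<bar>\<beta>\<bar>) * real CARD('d) + \<bar>\<beta>\<bar> * (\<Sum>k\<in>UNIV. \<Sum>n\<in>UNIV. cmod (ip (s k) (t n)))\<^sup>2) /
      ((real CARD('d))\<^sup>2 + real CARD('d) * \<beta>)"
proof -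
  define d where "d = real CARD('d)"
  define N where "N = d\<^sup>2 + d * \<beta>"
  define x where "x k n = ip (s k) (t n)" for k n
  define T where "T = (\<Sum>k\<in>UNIV. \<Sum>n\<in>UNIV. cmod (x k n))"
  have d2': "d \<ge> 2" unfolding d_def using d2 by simp
  have Npos: "N > 0"
  proof -
    have "d + \<beta> > 0" using d2' b1 by linarith
    hence "d * (d + \<beta>) > 0" using d2' by simp
    thus ?thesis unfolding N_def by (simp add: power2_eq_square algebra_simps)
  qed
  define M0 where "M0 = smul (inverse (complex_of_real N)) (KB s t \<beta>)"
  have eq: "ptrans (meas_AB_state s t (werner \<beta> :: ('d\<times>'d,'d\<times>'d) op)) = mmult (mmult (UG s t) M0) (adjoint (UG s t))"
  proof (intro ext)
    fix y y' :: "('d\<times>'d)\<times>('d\<times>'d)"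
    obtain a b k l where y: "y = ((a,b),(k,l))" by (metis prod.exhaust)
    obtain a' b' k' l' where y': "y' = ((a',b'),(k',l'))" by (metis prod.exhaust)
    have c: "(k' = k \<and> l' = l) = (k = k' \<and> l = l')" by blast
    show "ptrans (meas_AB_state s t (werner \<beta> :: ('d\<times>'d,'d\<times>'d) op)) y y' = mmult (mmult (UG s t) M0) (adjoint (UG s t)) y y'"
      unfolding y y' M0_def smul_conj MAB_eq[OF os ot] c
      by (simp add: smul_def UG_conjB divide_inverse mult_ac N_def d_def)
  qed
  have herm: "adjoint M0 = M0"
    unfolding M0_def adjoint_smul KB_herm by simp
  have supp: "M0 p q \<noteq> 0 \<Longrightarrow> q = sigB p" for p q
    using KB_supp[of s t \<beta> p q] unfolding M0_def smul_def by auto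
  have mono: "\<forall>p q q'. M0 p q \<noteq> 0 \<longrightarrow> M0 p q' \<noteq> 0 \<longrightarrow> q = q'"
    using supp by metis
  have tn: "trace_norm (ptrans (meas_AB_state s t (werner \<beta> :: ('d\<times>'d,'d\<times>'d) op))) =
      (\<Sum>p\<in>UNIV. \<Sum>q\<in>UNIV. cmod (M0 p q))"
    unfolding eq by (rule trace_norm_monomial[OF herm mono UG_unit[OF os ot]])
  have row: "(\<Sum>q\<in>UNIV. cmod (M0 p q)) = cmod (KB s t \<beta> p (sigB p)) / N" for p
  proof -
    have "(\<Sum>q\<in>UNIV. cmod (M0 p q)) = cmod (M0 p (sigB p))"
      by (rule sum_single_real) (use supp in fastforce)
    also have "\<dots> = cmod (KB s t \<beta> p (sigB p)) / N"
      unfolding M0_def smul_def using Npos by (simp add: norm_mult norm_inverse divide_inverse mult.commute)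
    finally show ?thesis .
  qed
  have xle: "cmod (x k n) \<le> 1" for k n unfolding x_def by (rule ip_le1[OF os ot])
  have par: "(\<Sum>n\<in>UNIV. (cmod (x k n))\<^sup>2) = 1" for k unfolding x_def by (rule parseval[OF os ot])
  define v where "v k l m n = (if m = k \<and> n = l then 1 + (\<beta> - \<bar>\<beta>\<bar>) * (cmod (x k l))\<^sup>2 else 0)
      + \<bar>\<beta>\<bar> * (cmod (x k n) * cmod (x m l))" for k l m n
  have xc: "ip (t l) (s m) = cnj (x m l)" for l m unfolding x_def by (simp add: cnj_ip)
  have val: "cmod (KB s t \<beta> ((k,l),(m,n)) (sigB ((k,l),(m,n)))) = v k l m n" for k l m n
  proof (cases "m = k \<and> n = l")
    case True
    hence mk: "m = k" "n = l" by auto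
    have e: "(1::complex) + complex_of_real \<beta> * (x k l * cnj (x k l)) = complex_of_real (1 + \<beta> * (cmod (x k l))\<^sup>2)"
      using complex_norm_square[of "x k l"] by simp
    have "\<beta> * (cmod (x k l))\<^sup>2 \<ge> - 1"
    proof -
      have "(cmod (x k l))\<^sup>2 \<le> 1" using xle[of k l] by (simp add: power_le_one)
      moreover have "\<beta> * (cmod (x k l))\<^sup>2 \<ge> - \<bar>\<beta>\<bar> * (cmod (x k l))\<^sup>2"
        by (rule mult_right_mono) auto
      moreover have "\<bar>\<beta>\<bar> * (cmod (x k l))\<^sup>2 \<le> 1 * 1"
        using b1 \<open>(cmod (x k l))\<^sup>2 \<le> 1\<close> by (intro mult_mono) auto
      ultimately show ?thesis by linarith
    qed
    hence "cmod (complex_of_real (1 + \<beta> * (cmod (x k l))\<^sup>2)) = 1 + \<beta> * (cmod (x k l))\<^sup>2"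
      by (simp only: norm_of_real)
    thus ?thesis unfolding mk sigB_def v_def
      by (simp add: KB_sig xc x_def[symmetric] e power2_eq_square algebra_simps)
  next
    case False
    have k1: "KB s t \<beta> ((k,l),(m,n)) (sigB ((k,l),(m,n))) = (if m = k \<and> n = l then 1 else 0) + complex_of_real \<beta> * (x k n * cnj (x m l))"
      unfolding sigB_def fst_conv snd_conv KB_sig xc x_def[symmetric] ..
    have "cmod (KB s t \<beta> ((k,l),(m,n)) (sigB ((k,l),(m,n)))) = cmod (complex_of_real \<beta> * (x k n * cnj (x m l)))"
      unfolding k1 if_not_P[OF False] by simp
    also have "\<dots> = \<bar>\<beta>\<bar> * (cmod (x k n) * cmod (x m l))" by (simp add: norm_mult)
    finally show ?thesis unfolding v_def if_not_P[OF False] by simp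
  qed
  have sum1: "(\<Sum>k\<in>UNIV. \<Sum>l\<in>UNIV. \<Sum>m\<in>UNIV. \<Sum>n\<in>UNIV.
      (if m = k \<and> n = l then 1 + (\<beta> - \<bar>\<beta>\<bar>) * (cmod (x k l))\<^sup>2 else 0)) = d\<^sup>2 + (\<beta> - \<bar>\<beta>\<bar>) * d"
  proof -
    have "(\<Sum>k\<in>UNIV. \<Sum>l\<in>UNIV. \<Sum>m\<in>UNIV. \<Sum>n\<in>UNIV.
      (if m = k \<and> n = l then 1 + (\<beta> - \<bar>\<beta>\<bar>) * (cmod (x k l))\<^sup>2 else 0))
      = (\<Sum>k\<in>UNIV. \<Sum>l\<in>UNIV. 1 + (\<beta> - \<bar>\<beta>\<bar>) * (cmod (x k l))\<^sup>2)"
      by (simp add: dsimps)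
    also have "\<dots> = (\<Sum>k\<in>(UNIV::'d set). \<Sum>l\<in>(UNIV::'d set). 1) + (\<beta> - \<bar>\<beta>\<bar>) * (\<Sum>k\<in>UNIV. \<Sum>l\<in>UNIV. (cmod (x k l))\<^sup>2)"
      by (simp add: sum.distrib sum_distrib_left)
    also have "\<dots> = d\<^sup>2 + (\<beta> - \<bar>\<beta>\<bar>) * d"
      unfolding par d_def by (simp add: power2_eq_square)
    finally show ?thesis .
  qed
  have sum2: "(\<Sum>k\<in>UNIV. \<Sum>l\<in>UNIV. \<Sum>m\<in>UNIV. \<Sum>n\<in>UNIV. cmod (x k n) * cmod (x m l)) = T\<^sup>2"
  proof -
    have A: "(\<Sum>l\<in>UNIV. \<Sum>m\<in>UNIV. \<Sum>n\<in>UNIV. cmod (x k n) * cmod (x m l))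
       = (\<Sum>n\<in>UNIV. \<Sum>m\<in>UNIV. \<Sum>l\<in>UNIV. cmod (x k n) * cmod (x m l))" for k
      by (rule sum3_rev[of "\<lambda>l m n. cmod (x k n) * cmod (x m l)"])
    have B: "(\<Sum>n\<in>UNIV. \<Sum>m\<in>UNIV. \<Sum>l\<in>UNIV. cmod (x k n) * cmod (x m l)) = (\<Sum>n\<in>UNIV. cmod (x k n) * T)" for k
      unfolding T_def by (simp only: sum_distrib_left)
    have "(\<Sum>k\<in>UNIV. \<Sum>l\<in>UNIV. \<Sum>m\<in>UNIV. \<Sum>n\<in>UNIV. cmod (x k n) * cmod (x m l)) = (\<Sum>k\<in>UNIV. \<Sum>n\<in>UNIV. cmod (x k n) * T)"
      by (simp only: A B)
    also have "\<dots> = T * T" by (simp only: sum_distrib_right[symmetric] T_def)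
    finally show ?thesis by (simp add: power2_eq_square)
  qed
  have "(\<Sum>p\<in>UNIV. cmod (KB s t \<beta> p (sigB p))) = (\<Sum>k\<in>UNIV. \<Sum>l\<in>UNIV. \<Sum>m\<in>UNIV. \<Sum>n\<in>UNIV. v k l m n)"
    by (simp add: sum_UNIV_prod val)
  also have "\<dots> = d\<^sup>2 + (\<beta> - \<bar>\<beta>\<bar>) * d + \<bar>\<beta>\<bar> * T\<^sup>2"
    unfolding v_def sum.distrib sum1 by (simp add: sum_distrib_left[symmetric] sum2)
  finally have S: "(\<Sum>p\<in>UNIV. cmod (KB s t \<beta> p (sigB p))) = d\<^sup>2 + (\<beta> - \<bar>\<beta>\<bar>) * d + \<bar>\<beta>\<bar> * T\<^sup>2" .
  have "trace_norm (ptrans (meas_AB_state s t (werner \<beta> :: ('d\<times>'d,'d\<times>'d) op))) = (\<Sum>p\<in>UNIV. cmod (KB s t \<beta> p (sigB p))) / N"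
    unfolding tn row by (simp add: sum_divide_distrib)
  thus ?thesis unfolding S N_def d_def T_def x_def .
qed



lemma QA_trace_norm:
  fixes s :: "'d::finite \<Rightarrow> 'd \<Rightarrow> complex"
  assumes on: "orthonormal_basis s" and b1: "\<bar>\<beta>\<bar> \<le> 1" and d2: "CARD('d) \<ge> 2"
  shows "trace_norm (ptrans (meas_A_state s (werner \<beta> :: ('d\<times>'d,'d\<times>'d) op))) =
    ((real CARD('d))\<^sup>2 + real CARD('d) * \<beta> + \<bar>\<beta>\<bar> * ((real CARD('d))\<^sup>2 - real CARD('d))) /
      ((real CARD('d))\<^sup>2 + real CARD('d) * \<beta>)"
proof -
  define d where "d = real CARD('d)"
  define N where "N = d\<^sup>2 + d * \<beta>"
  have d2': "d \<ge> 2" unfolding d_def using d2 by simp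
  have Npos: "N > 0"
  proof -
    have "d + \<beta> > 0" using d2' b1 by linarith
    hence "d * (d + \<beta>) > 0" using d2' by simp
    thus ?thesis unfolding N_def by (simp add: power2_eq_square algebra_simps)
  qed
  define M0 where "M0 = smul (inverse (complex_of_real N)) (K0A \<beta> :: (('d\<times>'d)\<times>'d, ('d\<times>'d)\<times>'d) op)"
  have eq: "ptrans (meas_A_state s (werner \<beta> :: ('d\<times>'d,'d\<times>'d) op)) = mmult (mmult (UA s) M0) (adjoint (UA s))"
  proof (intro ext)
    fix x x' :: "('d\<times>'d)\<times>'d"
    obtain a b k where x: "x = ((a,b),k)" by (metis prod.exhaust)
    obtain a' b' k' where x': "x' = ((a',b'),k')" by (metis prod.exhaust)
    show "ptrans (meas_A_state s (werner \<beta> :: ('d\<times>'d,'d\<times>'d) op)) x x' = mmult (mmult (UA s) M0) (adjoint (UA s)) x x'"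
      unfolding x x' M0_def smul_conj MA_eq[OF on]
      by (simp add: smul_def UA_conj0[OF on] divide_inverse mult_ac N_def d_def)
  qed
  have herm: "adjoint M0 = M0"
    unfolding M0_def adjoint_smul K0A_herm by simp
  have supp: "M0 p q \<noteq> 0 \<Longrightarrow> q = sigA p" for p q
    using K0A_supp[of \<beta> p q] unfolding M0_def smul_def by auto
  have mono: "\<forall>p q q'. M0 p q \<noteq> 0 \<longrightarrow> M0 p q' \<noteq> 0 \<longrightarrow> q = q'"
    using supp by metis
  have tn: "trace_norm (ptrans (meas_A_state s (werner \<beta> :: ('d\<times>'d,'d\<times>'d) op))) =
      (\<Sum>p\<in>UNIV. \<Sum>q\<in>UNIV. cmod (M0 p q))"
    unfolding eq by (rule trace_norm_monomial[OF herm mono UA_unit[OF on]])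
  have row: "(\<Sum>q\<in>UNIV. cmod (M0 p q)) = cmod (K0A \<beta> p (sigA p)) / N" for p
  proof -
    have "(\<Sum>q\<in>UNIV. cmod (M0 p q)) = cmod (M0 p (sigA p))"
      by (rule sum_single_real) (use supp in fastforce)
    also have "\<dots> = cmod (K0A \<beta> p (sigA p)) / N"
      unfolding M0_def smul_def using Npos by (simp add: norm_mult norm_inverse divide_inverse mult.commute)
    finally show ?thesis .
  qed
  define h where "h p = (case p of ((k,l),m) \<Rightarrow>
      (if m = k then 1 else 0) + (if m = k \<and> l = k then \<beta> else 0) + (if l = m then \<bar>\<beta>\<bar> else 0)
        - (if l = m \<and> m = k then \<bar>\<beta>\<bar> else 0))" for p :: "('d\<times>'d)\<times>'d"
  have hk: "cmod (K0A \<beta> p (sigA p)) = h p" for p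
  proof -
    obtain k l m where p: "p = ((k,l),m)" by (metis prod.exhaust)
    have e: "(1::complex) + complex_of_real \<beta> = complex_of_real (1 + \<beta>)" by simp
    have "cmod (1 + complex_of_real \<beta>) = 1 + \<beta>" unfolding e norm_of_real using b1 by simp
    then show ?thesis unfolding p K0A_sig h_def by (auto simp: eq_commute[of m k])
  qed
  have sumh: "(\<Sum>p\<in>UNIV. h p) = d\<^sup>2 + d * \<beta> + \<bar>\<beta>\<bar> * (d\<^sup>2 - d)"
    unfolding h_def d_def
    by (simp add: sum_UNIV_prod sum.distrib sum_subtractf dsimps power2_eq_square algebra_simps)
  have "trace_norm (ptrans (meas_A_state s (werner \<beta> :: ('d\<times>'d,'d\<times>'d) op))) = (\<Sum>p\<in>UNIV. h p) / N"
    unfolding tn row hk by (simp add: sum_divide_distrib)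
  thus ?thesis unfolding sumh N_def d_def .
qed




definition stdb :: "'d \<Rightarrow> 'd \<Rightarrow> complex" where "stdb k i = (if k = i then 1 else 0)"

lemma stdb_on: "orthonormal_basis (stdb :: 'd::finite \<Rightarrow> 'd \<Rightarrow> complex)"
  unfolding orthonormal_basis_def stdb_def by (simp add: dsimps)

lemma alg_A:
  fixes d \<beta> :: real
  assumes "d \<ge> 2" "\<bar>\<beta>\<bar> \<le> 1"
  shows "((d\<^sup>2 + d * \<beta> + \<bar>\<beta>\<bar> * (d\<^sup>2 - d)) / (d\<^sup>2 + d * \<beta>) - 1) / 2 = \<bar>\<beta>\<bar> * (d - 1) / (2 * (d + \<beta>))"
proof -
  have p: "d + \<beta> > 0" using assms by linarith
  have d0: "d > 0" using assms by simp
  have N: "d\<^sup>2 + d * \<beta> = d * (d + \<beta>)" by (simp add: power2_eq_square algebra_simps)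
  have "d * (d + \<beta>) > 0" using p d0 by simp
  have a1: "d \<noteq> 0" "d + \<beta> \<noteq> 0" using p d0 by auto
  have Nne: "d\<^sup>2 + d * \<beta> \<noteq> 0" unfolding N using a1 by simp
  have s1: "(d\<^sup>2 + d * \<beta> + \<bar>\<beta>\<bar> * (d\<^sup>2 - d)) / (d\<^sup>2 + d * \<beta>) - 1 = \<bar>\<beta>\<bar> * (d\<^sup>2 - d) / (d\<^sup>2 + d * \<beta>)"
    using Nne by (simp add: add_divide_distrib)
  have e2: "d\<^sup>2 - d = d * (d - 1)" by (simp add: power2_eq_square algebra_simps)
  have s2: "\<bar>\<beta>\<bar> * (d\<^sup>2 - d) / (d\<^sup>2 + d * \<beta>) = \<bar>\<beta>\<bar> * (d - 1) / (d + \<beta>)"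
    unfolding e2 N using a1 by simp
  show ?thesis unfolding s1 s2 by simp
qed

lemma half_mono: "(a::real) \<le> b \<Longrightarrow> (a - 1) / 2 \<le> (b - 1) / 2" by simp

lemma alg_B:
  fixes d \<beta> T :: real
  assumes "d \<ge> 2" "\<bar>\<beta>\<bar> \<le> 1" "T \<ge> d"
  shows "((d\<^sup>2 + (\<beta> - \<bar>\<beta>\<bar>) * d + \<bar>\<beta>\<bar> * T\<^sup>2) / (d\<^sup>2 + d * \<beta>) - 1) / 2 \<ge> \<bar>\<beta>\<bar> * (d - 1) / (2 * (d + \<beta>))"
proof -
  have p: "d + \<beta> > 0" using assms by linarith
  have d0: "d > 0" using assms by simp
  have Np: "d\<^sup>2 + d * \<beta> > 0"
  proof -
    have "d * (d + \<beta>) > 0" using p d0 by simp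
    thus ?thesis by (simp add: power2_eq_square algebra_simps)
  qed
  have "T\<^sup>2 \<ge> d\<^sup>2" using assms(3) d0 by (simp add: power_mono)
  hence "\<bar>\<beta>\<bar> * d\<^sup>2 \<le> \<bar>\<beta>\<bar> * T\<^sup>2" by (rule mult_left_mono) simp
  hence num: "d\<^sup>2 + d * \<beta> + \<bar>\<beta>\<bar> * (d\<^sup>2 - d) \<le> d\<^sup>2 + (\<beta> - \<bar>\<beta>\<bar>) * d + \<bar>\<beta>\<bar> * T\<^sup>2"
    by (simp add: algebra_simps)
  have "(d\<^sup>2 + d * \<beta> + \<bar>\<beta>\<bar> * (d\<^sup>2 - d)) / (d\<^sup>2 + d * \<beta>) \<le> (d\<^sup>2 + (\<beta> - \<bar>\<beta>\<bar>) * d + \<bar>\<beta>\<bar> * T\<^sup>2) / (d\<^sup>2 + d * \<beta>)"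
    using num Np by (intro divide_right_mono) auto
  hence "((d\<^sup>2 + d * \<beta> + \<bar>\<beta>\<bar> * (d\<^sup>2 - d)) / (d\<^sup>2 + d * \<beta>) - 1) / 2 \<le> ((d\<^sup>2 + (\<beta> - \<bar>\<beta>\<bar>) * d + \<bar>\<beta>\<bar> * T\<^sup>2) / (d\<^sup>2 + d * \<beta>) - 1) / 2"
    by (rule half_mono)
  thus ?thesis unfolding alg_A[OF assms(1,2)] .
qed

lemma T_ge:
  fixes s t :: "'d::finite \<Rightarrow> 'd \<Rightarrow> complex"
  assumes os: "orthonormal_basis s" and ot: "orthonormal_basis t"
  shows "(\<Sum>k\<in>UNIV. \<Sum>n\<in>UNIV. cmod (ip (s k) (t n))) \<ge> real CARD('d)"
proof -
  have "(\<Sum>k\<in>UNIV. \<Sum>n\<in>UNIV. cmod (ip (s k) (t n))) \<ge> (\<Sum>k\<in>UNIV. \<Sum>n\<in>UNIV. (cmod (ip (s k) (t n)))\<^sup>2)"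
  proof (intro sum_mono)
    fix k n
    have "cmod (ip (s k) (t n)) \<le> 1" by (rule ip_le1[OF os ot])
    thus "(cmod (ip (s k) (t n)))\<^sup>2 \<le> cmod (ip (s k) (t n))"
      by (simp add: power2_eq_square mult_left_le)
  qed
  also have "(\<Sum>k\<in>UNIV. \<Sum>n\<in>UNIV. (cmod (ip (s k) (t n)))\<^sup>2) = real CARD('d)"
    by (simp add: parseval[OF os ot])
  finally show ?thesis .
qed

lemma T_std: "(\<Sum>k\<in>UNIV. \<Sum>n\<in>UNIV. cmod (ip (stdb k) (stdb n :: 'd::finite \<Rightarrow> complex))) = real CARD('d)"
proof -
  have "ip (stdb k) (stdb n :: 'd::finite \<Rightarrow> complex) = (if k = n then 1 else 0)" for k n
    unfolding ip_def stdb_def by (simp add: dsimps)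
  moreover have "cmod (if k = n then 1 else (0::complex)) = (if k = n then 1 else 0)" for k n :: 'd by simp
  ultimately show ?thesis by (simp add: dsimps)
qed


theorem theorem13:
  fixes \<beta> :: real
  assumes "CARD('d::finite) \<ge> 2" and "\<bar>\<beta>\<bar> \<le> 1"
  shows "QA_neg (werner \<beta> :: ('d \<times> 'd, 'd \<times> 'd) op) =
           \<bar>\<beta>\<bar> * (real CARD('d) - 1) / (2 * (real CARD('d) + \<beta>))
       \<and> QAB_neg (werner \<beta> :: ('d \<times> 'd, 'd \<times> 'd) op) =
           \<bar>\<beta>\<bar> * (real CARD('d) - 1) / (2 * (real CARD('d) + \<beta>))"
proof -
  define c where "c = \<bar>\<beta>\<bar> * (real CARD('d) - 1) / (2 * (real CARD('d) + \<beta>))"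
  have d2: "real CARD('d) \<ge> 2" using assms(1) by simp
  have negA: "negativity (meas_A_state s (werner \<beta> :: ('d \<times> 'd, 'd \<times> 'd) op)) = c"
    if os: "orthonormal_basis (s :: 'd \<Rightarrow> 'd \<Rightarrow> complex)" for s
    unfolding negativity_def QA_trace_norm[OF os assms(2) assms(1)] c_def
    by (rule alg_A[OF d2 assms(2)])
  have negB: "negativity (meas_AB_state s t (werner \<beta> :: ('d \<times> 'd, 'd \<times> 'd) op)) \<ge> c"
    if os: "orthonormal_basis (s :: 'd \<Rightarrow> 'd \<Rightarrow> complex)" and ot: "orthonormal_basis (t :: 'd \<Rightarrow> 'd \<Rightarrow> complex)" for s t
    unfolding negativity_def QAB_trace_norm[OF os ot assms(2) assms(1)] c_def
    by (rule alg_B[OF d2 assms(2) T_ge[OF os ot]])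
  have negBs: "negativity (meas_AB_state stdb stdb (werner \<beta> :: ('d \<times> 'd, 'd \<times> 'd) op)) = c"
  proof -
    have e: "(real CARD('d))\<^sup>2 + (\<beta> - \<bar>\<beta>\<bar>) * real CARD('d) + \<bar>\<beta>\<bar> * (real CARD('d))\<^sup>2
      = (real CARD('d))\<^sup>2 + real CARD('d) * \<beta> + \<bar>\<beta>\<bar> * ((real CARD('d))\<^sup>2 - real CARD('d))"
      by (simp add: algebra_simps)
    show ?thesis
      unfolding negativity_def QAB_trace_norm[OF stdb_on stdb_on assms(2) assms(1)] T_std e c_def
      by (rule alg_A[OF d2 assms(2)])
  qed
  have "QA_neg (werner \<beta> :: ('d \<times> 'd, 'd \<times> 'd) op) = c"
    unfolding QA_neg_def
  proof (rule cInf_eq_minimum)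
    show "c \<in> (\<lambda>s. negativity (meas_A_state s (werner \<beta> :: ('d \<times> 'd, 'd \<times> 'd) op))) ` {s. orthonormal_basis s}"
      using negA[OF stdb_on] stdb_on by (metis (mono_tags) image_eqI mem_Collect_eq)
  next
    fix x assume "x \<in> (\<lambda>s. negativity (meas_A_state s (werner \<beta> :: ('d \<times> 'd, 'd \<times> 'd) op))) ` {s. orthonormal_basis s}"
    thus "c \<le> x" using negA by auto
  qed
  moreover have "QAB_neg (werner \<beta> :: ('d \<times> 'd, 'd \<times> 'd) op) = c"
    unfolding QAB_neg_def
  proof (rule cInf_eq_minimum)
    show "c \<in> (\<lambda>st. negativity (meas_AB_state (fst st) (snd st) (werner \<beta> :: ('d \<times> 'd, 'd \<times> 'd) op))) ` {(s, t). orthonormal_basis s \<and> orthonormal_basis t}"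
      using negBs stdb_on by (intro image_eqI[of _ _ "(stdb, stdb)"]) auto
  next
    fix x assume "x \<in> (\<lambda>st. negativity (meas_AB_state (fst st) (snd st) (werner \<beta> :: ('d \<times> 'd, 'd \<times> 'd) op))) ` {(s, t). orthonormal_basis s \<and> orthonormal_basis t}"
    thus "c \<le> x" using negB by auto
  qed
  ultimately show ?thesis unfolding c_def by simp
qed


end
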